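(* Let $(\Omega,\mathcal A,\mu)$ be a probability space admitting a learning rule that is consistent under every learning problem $(\mu,\eta)$ with $\eta:\Omega\to[0,1]$ an $\mathcal A$-measurable regression function. Then the Maharam type of the measure algebra $(\mathcal A,\mu\circ\Delta)$ does not exceed the cardinality of $\Omega$.
   Context: For a measurable space $(\Omega,\mathcal A)$, a learning rule $\mathcal L$ assigns to every $n\ge1$, labelled sample $\sigma\in\Omega^n\times\{0,1\}^n$ and $x\in\Omega$ a label $\mathcal L_n(\sigma)(x)\in\{0,1\}$ (measurably in $(\sigma,x)$), so that $\mathcal L_n(\sigma)$ is a measurable classifier $\Omega\to\{0,1\}$. A probability measure $\mu$ on $\Omega$ together with a measurable $\eta:\Omega\to[0,1]$ determines a probability measure $\tilde\mu$ on $\Omega\times\{0,1\}$ by $\tilde\mu(A\times\{1\})=\int_A\eta\,d\mu$, $\tilde\mu(A\times\{0\})=\int_A(1-\eta)\,d\mu$. The error is $\mathrm{err}_{\tilde\mu}(\mathcal L_n)=(\tilde\mu^n\otimes\tilde\mu)\{(\sigma,x,y):\mathcal L_n(\sigma)(x)\ne y\}$ and the Bayes error is $\ell^*(\tilde\mu)=\inf_T\tilde\mu\{(x,y):T(x)\ne y\}$ over measurable classifiers $T$; the rule is consistent under $(\mu,\eta)$ if $\mathrm{err}_{\tilde\mu}(\mathcal L_n)\to\ell^*(\tilde\mu)$. The measure algebra $(\mathcal A,\mu\circ\Delta)$ is the quotient of $\mathcal A$ by the ideal of $\mu$-null sets, with metric $d(A,B)=\mu(A\Delta B)$. Its Maharam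 type is the smallest cardinality of a subset of this Boolean algebra generating a subalgebra that is dense for this metric. *)

theory Defs
  imports "HOL-Probability.Probability"
begin

text \<open>Labels 0/1 are represented by False/True. A labelled sample of size n is a
  function on the index set {..<n} (an element of the product space).\<close>

type_synonym 'a learning_rule = "nat \<Rightarrow> (nat \<Rightarrow> 'a \<times> bool) \<Rightarrow> 'a \<Rightarrow> bool"

definition is_learning_rule :: "'a measure \<Rightarrow> 'a learning_rule \<Rightarrow> bool" where
  "is_learning_rule M L \<longleftrightarrow>
     (\<forall>n\<ge>1. (\<lambda>(\<sigma>, x). L n \<sigma> x) \<in>
        (PiM {..<n} (\<lambda>_. M \<Otimes>\<^sub>M count_space (UNIV::bool set)) \<Otimes>\<^sub>M M) \<rightarrow>\<^sub>M count_space UNIV)"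

definition is_regression :: "'a measure \<Rightarrow> ('a \<Rightarrow> real) \<Rightarrow> bool" where
  "is_regression M \<eta> \<longleftrightarrow> \<eta> \<in> borel_measurable M \<and> (\<forall>x\<in>space M. 0 \<le> \<eta> x \<and> \<eta> x \<le> 1)"

definition joint_measure :: "'a measure \<Rightarrow> ('a \<Rightarrow> real) \<Rightarrow> ('a \<times> bool) measure" where
  "joint_measure M \<eta> = density (M \<Otimes>\<^sub>M count_space (UNIV::bool set))
      (\<lambda>(x, y). ennreal (if y then \<eta> x else 1 - \<eta> x))"

definition learning_error :: "('a \<times> bool) measure \<Rightarrow> 'a learning_rule \<Rightarrow> nat \<Rightarrow> real" where
  "learning_error P L n =
     measure (PiM {..<n} (\<lambda>_. P) \<Otimes>\<^sub>M P)
       {(\<sigma>, (x, y)) \<in> space (PiM {..<n} (\<lambda>_. P) \<Otimes>\<^sub>M P). L n \<sigma> x \<noteq> y}"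

definition bayes_error :: "'a measure \<Rightarrow> ('a \<times> bool) measure \<Rightarrow> real" where
  "bayes_error M P =
     (INF T \<in> (M \<rightarrow>\<^sub>M count_space (UNIV::bool set)).
        measure P {p \<in> space P. T (fst p) \<noteq> snd p})"

definition consistent_under :: "'a measure \<Rightarrow> 'a learning_rule \<Rightarrow> ('a \<Rightarrow> real) \<Rightarrow> bool" where
  "consistent_under M L \<eta> \<longleftrightarrow>
     (\<lambda>n. learning_error (joint_measure M \<eta>) L n)
       \<longlonglongrightarrow> bayes_error M (joint_measure M \<eta>)"

definition ma_class :: "'a measure \<Rightarrow> 'a set \<Rightarrow> 'a set set" where
  "ma_class M A = {B \<in> sets M. measure M ((A - B) \<union> (B - A)) = 0}"

definition measure_algebra :: "'a measure \<Rightarrow> 'a set set set" where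
  "measure_algebra M = ma_class M ` sets M"

text \<open>Boolean subalgebra of the measure algebra generated by a set S of elements
  (equivalence classes); operations are computed on representatives.\<close>
inductive_set ma_generated :: "'a measure \<Rightarrow> 'a set set set \<Rightarrow> 'a set set set"
  for M S where
  gen_base: "c \<in> S \<Longrightarrow> c \<in> ma_generated M S"
| gen_top: "ma_class M (space M) \<in> ma_generated M S"
| gen_compl: "A \<in> sets M \<Longrightarrow> ma_class M A \<in> ma_generated M S
      \<Longrightarrow> ma_class M (space M - A) \<in> ma_generated M S"
| gen_union: "A \<in> sets M \<Longrightarrow> B \<in> sets M \<Longrightarrow> ma_class M A \<in> ma_generated M S
      \<Longrightarrow> ma_class M B \<in> ma_generated M S \<Longrightarrow> ma_class M (A \<union> B) \<in> ma_generated M S"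

definition ma_dense :: "'a measure \<Rightarrow> 'a set set set \<Rightarrow> bool" where
  "ma_dense M D \<longleftrightarrow>
     (\<forall>A\<in>sets M. \<forall>e>0. \<exists>B\<in>sets M. ma_class M B \<in> D \<and> measure M ((A - B) \<union> (B - A)) < e)"

text \<open>The Maharam type (least cardinality of a generating set of a dense subalgebra)
  is at most the cardinality of K.  Cardinals are well-ordered, so this is
  equivalent to the existence of such a generating set of cardinality \<le> |K|.\<close>
definition maharam_type_le :: "'a measure \<Rightarrow> 'b set \<Rightarrow> bool" where
  "maharam_type_le M K \<longleftrightarrow>
     (\<exists>S \<subseteq> measure_algebra M. (card_of S, card_of K) \<in> ordLeq \<and> ma_dense M (ma_generated M S))"

end

theory Submission imports Defs begin


lemma joint_emeasure:
  assumes M: "prob_space M" and eta: "is_regression M \<eta>"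
    and B: "B \<in> sets (M \<Otimes>\<^sub>M count_space (UNIV::bool set))"
  shows "emeasure (joint_measure M \<eta>) B =
    (\<integral>\<^sup>+x. ennreal (\<eta> x) * indicator B (x,True) + ennreal (1 - \<eta> x) * indicator B (x,False) \<partial>M)"
proof -
  interpret prob_space M by fact
  interpret C: sigma_finite_measure "count_space (UNIV::bool set)"
    by (rule sigma_finite_measure_count_space_finite) simp
  interpret pair_sigma_finite M "count_space (UNIV::bool set)" ..
  have em[measurable]: "\<eta> \<in> borel_measurable M" using eta by (simp add: is_regression_def)
  let ?f = "(\<lambda>(x, y). ennreal (if y then \<eta> x else 1 - \<eta> x))"
  have fm: "?f \<in> borel_measurable (M \<Otimes>\<^sub>M count_space (UNIV::bool set))"
    by measurable
  have "emeasure (joint_measure M \<eta>) B = (\<integral>\<^sup>+ z. ?f z * indicator B z \<partial>(M \<Otimes>\<^sub>M count_space UNIV))"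
    unfolding joint_measure_def by (rule emeasure_density[OF fm B])
  also have "\<dots> = (\<integral>\<^sup>+ x. \<integral>\<^sup>+ y. ?f (x,y) * indicator B (x,y) \<partial>count_space UNIV \<partial>M)"
    by (rule C.nn_integral_fst[symmetric]) (use fm B in measurable)
  also have "\<dots> = (\<integral>\<^sup>+x. ennreal (\<eta> x) * indicator B (x,True) + ennreal (1 - \<eta> x) * indicator B (x,False) \<partial>M)"
    apply (rule nn_integral_cong)
    apply (subst nn_integral_count_space_finite, simp)
    apply (simp add: UNIV_bool del: sum_mult_indicator)
    done
  finally show ?thesis .
qed

lemma joint_prob:
  assumes M: "prob_space M" and eta: "is_regression M \<eta>"
  shows "prob_space (joint_measure M \<eta>)"
proof (rule prob_spaceI)
  interpret prob_space M by fact
  have sp: "space (joint_measure M \<eta>) = space (M \<Otimes>\<^sub>M count_space (UNIV::bool set))"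
    by (simp add: joint_measure_def)
  have "emeasure (joint_measure M \<eta>) (space (joint_measure M \<eta>)) =
     (\<integral>\<^sup>+x. ennreal (\<eta> x) * indicator (space (M \<Otimes>\<^sub>M count_space (UNIV::bool set))) (x,True)
         + ennreal (1 - \<eta> x) * indicator (space (M \<Otimes>\<^sub>M count_space (UNIV::bool set))) (x,False) \<partial>M)"
    unfolding sp by (rule joint_emeasure[OF M eta]) simp
  also have "\<dots> = (\<integral>\<^sup>+x. 1 \<partial>M)"
  proof (rule nn_integral_cong)
    fix x assume x: "x \<in> space M"
    then have "0 \<le> \<eta> x" "\<eta> x \<le> 1" using eta by (auto simp: is_regression_def)
    then show "ennreal (\<eta> x) * indicator (space (M \<Otimes>\<^sub>M count_space (UNIV::bool set))) (x,True)
         + ennreal (1 - \<eta> x) * indicator (space (M \<Otimes>\<^sub>M count_space (UNIV::bool set))) (x,False) = 1"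
      using x by (simp add: space_pair_measure ennreal_plus[symmetric] del: ennreal_plus)
  qed
  also have "\<dots> = 1" by (simp add: emeasure_space_1)
  finally show "emeasure (joint_measure M \<eta>) (space (joint_measure M \<eta>)) = 1" .
qed

lemma joint_err:
  assumes M: "prob_space M" and A: "A \<in> sets M" and C: "{x\<in>space M. g x} \<in> sets M"
  shows "emeasure (joint_measure M (indicator A)) {(x,y)\<in>space (joint_measure M (indicator A)). g x \<noteq> y}
     = emeasure M ((A - {x\<in>space M. g x}) \<union> ({x\<in>space M. g x} - A))"
proof -
  have eta: "is_regression M (indicator A)" using A by (auto simp: is_regression_def indicator_def)
  let ?C = "{x\<in>space M. g x}"
  have sp: "space (joint_measure M (indicator A)) = space M \<times> UNIV"
    by (simp add: joint_measure_def space_pair_measure)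
  have eq: "{(x,y)\<in>space (joint_measure M (indicator A)). g x \<noteq> y} = (?C \<times> {False}) \<union> ((space M - ?C) \<times> {True})"
    unfolding sp by auto
  have B: "(?C \<times> {False}) \<union> ((space M - ?C) \<times> {True}) \<in> sets (M \<Otimes>\<^sub>M count_space (UNIV::bool set))"
    using C by auto
  have "emeasure (joint_measure M (indicator A)) {(x,y)\<in>space (joint_measure M (indicator A)). g x \<noteq> y}
     = (\<integral>\<^sup>+x. ennreal (indicator A x) * indicator ((?C \<times> {False}) \<union> ((space M - ?C) \<times> {True})) (x,True)
         + ennreal (1 - indicator A x) * indicator ((?C \<times> {False}) \<union> ((space M - ?C) \<times> {True})) (x,False) \<partial>M)"
    unfolding eq by (rule joint_emeasure[OF M eta B])
  also have "\<dots> = (\<integral>\<^sup>+x. indicator ((A - ?C) \<union> (?C - A)) x \<partial>M)"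
    apply (rule nn_integral_cong)
    using sets.sets_into_space[OF A] by (auto simp: indicator_def)
  also have "\<dots> = emeasure M ((A - ?C) \<union> (?C - A))"
    using A C by (intro nn_integral_indicator) auto
  finally show ?thesis .
qed

lemma bayes_zero:
  assumes M: "prob_space M" and A: "A \<in> sets M"
  shows "bayes_error M (joint_measure M (indicator A)) = 0"
proof -
  let ?P = "joint_measure M (indicator A)"
  let ?F = "\<lambda>T. measure ?P {p \<in> space ?P. T (fst p) \<noteq> snd p}"
  have T: "(\<lambda>x. x \<in> A) \<in> M \<rightarrow>\<^sub>M count_space (UNIV::bool set)" using pred_sets2[OF A measurable_ident] by simp
  have sp: "{x \<in> space M. x \<in> A} = A" using sets.sets_into_space[OF A] by auto
  have spA: "{x \<in> space M. x \<in> A} \<in> sets M" unfolding sp by (rule A)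
  have "emeasure ?P {(x,y)\<in>space ?P. (x \<in> A) \<noteq> y} = emeasure M ((A - {x\<in>space M. x \<in> A}) \<union> ({x\<in>space M. x \<in> A} - A))"
    by (rule joint_err[OF M A spA])
  also have "(A - {x\<in>space M. x \<in> A}) \<union> ({x\<in>space M. x \<in> A} - A) = {}" unfolding sp by blast
  finally have e0: "emeasure ?P {(x,y)\<in>space ?P. (x \<in> A) \<noteq> y} = 0" by simp
  have "{p \<in> space ?P. (fst p \<in> A) \<noteq> snd p} = {(x,y)\<in>space ?P. (x \<in> A) \<noteq> y}" by (auto simp del: space_pair_measure)
  then have F0: "?F (\<lambda>x. x \<in> A) = 0" using e0 unfolding measure_def by simp
  have bdd: "bdd_below (?F ` (M \<rightarrow>\<^sub>M count_space UNIV))"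
    by (rule bdd_belowI[of _ 0]) auto
  have "bayes_error M ?P \<le> ?F (\<lambda>x. x \<in> A)"
    unfolding bayes_error_def by (rule cINF_lower[OF bdd T])
  then have "bayes_error M ?P \<le> 0" using F0 by simp
  moreover have "bayes_error M ?P \<ge> 0"
    unfolding bayes_error_def using T by (intro cINF_greatest) auto
  ultimately show ?thesis by simp
qed

lemma approx:
  assumes M: "prob_space M" and L: "is_learning_rule M L"
    and cons: "\<forall>\<eta>. is_regression M \<eta> \<longrightarrow> consistent_under M L \<eta>"
    and A: "A \<in> sets M" and e: "e > 0"
  shows "\<exists>n\<ge>1. \<exists>\<sigma>\<in>space (PiM {..<n} (\<lambda>_. M \<Otimes>\<^sub>M count_space (UNIV::bool set))).
     {x\<in>space M. L n \<sigma> x} \<in> sets M \<and>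
     measure M ((A - {x\<in>space M. L n \<sigma> x}) \<union> ({x\<in>space M. L n \<sigma> x} - A)) < e"
proof (rule ccontr)
  assume contra: "\<not> ?thesis"
  interpret Mp: prob_space M by fact
  let ?P = "joint_measure M (indicator A)"
  let ?N = "M \<Otimes>\<^sub>M count_space (UNIV::bool set)"
  have eta: "is_regression M (indicator A)" using A by (auto simp: is_regression_def indicator_def)
  have Pp: "prob_space ?P" by (rule joint_prob[OF M eta])
  interpret P: prob_space ?P by fact
  have setsP: "sets ?P = sets ?N" by (simp add: joint_measure_def)
  have spP: "space ?P = space ?N" by (simp add: joint_measure_def)
  have "(\<lambda>n. learning_error ?P L n) \<longlonglongrightarrow> bayes_error M ?P"
    using cons eta by (simp add: consistent_under_def)
  then have "(\<lambda>n. learning_error ?P L n) \<longlonglongrightarrow> 0" using bayes_zero[OF M A] by simp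
  then have "eventually (\<lambda>n. learning_error ?P L n < e) sequentially"
    using e by (simp add: order_tendsto_iff)
  moreover have "eventually (\<lambda>n. n \<ge> (1::nat)) sequentially" by (rule eventually_ge_at_top)
  ultimately have "eventually (\<lambda>n. n \<ge> (1::nat) \<and> learning_error ?P L n < e) sequentially"
    by (rule eventually_conj[rotated])
  then obtain N where "\<forall>n\<ge>N. n \<ge> (1::nat) \<and> learning_error ?P L n < e"
    unfolding eventually_sequentially by blast
  then obtain n where n1: "n \<ge> 1" and le: "learning_error ?P L n < e" by blast
  let ?Pi = "PiM {..<n} (\<lambda>_. ?P)"
  have Pip: "prob_space ?Pi" by (rule prob_space_PiM) (rule Pp)
  interpret Pi: prob_space ?Pi by fact
  interpret PP: prob_space "?Pi \<Otimes>\<^sub>M ?P" by (rule prob_space_pair[OF Pip Pp])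
  have setsPi: "sets ?Pi = sets (PiM {..<n} (\<lambda>_. ?N))"
    by (rule sets_PiM_cong) (auto simp: setsP)
  have spPi: "space ?Pi = space (PiM {..<n} (\<lambda>_. ?N))"
    by (rule sets_eq_imp_space_eq[OF setsPi])
  have L0: "(\<lambda>(\<sigma>, x). L n \<sigma> x) \<in> (PiM {..<n} (\<lambda>_. ?N) \<Otimes>\<^sub>M M) \<rightarrow>\<^sub>M count_space UNIV"
    using L n1 by (simp add: is_learning_rule_def)
  have L1: "(\<lambda>(\<sigma>, x). L n \<sigma> x) \<in> (?Pi \<Otimes>\<^sub>M M) \<rightarrow>\<^sub>M count_space UNIV"
    using L0 by (simp add: measurable_cong_sets[OF sets_pair_measure_cong[OF setsPi refl] refl])
  let ?E = "{(\<sigma>, (x, y)) \<in> space (?Pi \<Otimes>\<^sub>M ?P). L n \<sigma> x \<noteq> y}"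
  have proj: "(\<lambda>z. (fst z, fst (snd z))) \<in> (?Pi \<Otimes>\<^sub>M ?P) \<rightarrow>\<^sub>M (?Pi \<Otimes>\<^sub>M M)"
  proof -
    have "(\<lambda>z. fst (snd z)) \<in> (?Pi \<Otimes>\<^sub>M ?P) \<rightarrow>\<^sub>M M"
    proof (rule measurable_compose[OF measurable_snd])
      show "fst \<in> ?P \<rightarrow>\<^sub>M M"
        unfolding measurable_cong_sets[OF setsP refl] by (rule measurable_fst)
    qed
    then show ?thesis by (intro measurable_Pair) auto
  qed
  have g: "(\<lambda>z. L n (fst z) (fst (snd z))) \<in> (?Pi \<Otimes>\<^sub>M ?P) \<rightarrow>\<^sub>M count_space UNIV"
    using measurable_compose[OF proj L1] by (simp add: split_beta)
  have sndm: "(\<lambda>z. snd (snd z)) \<in> (?Pi \<Otimes>\<^sub>M ?P) \<rightarrow>\<^sub>M count_space (UNIV::bool set)"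
  proof (rule measurable_compose[OF measurable_snd])
    show "snd \<in> ?P \<rightarrow>\<^sub>M count_space UNIV"
      unfolding measurable_cong_sets[OF setsP refl] by (rule measurable_snd)
  qed
  have "Measurable.pred (?Pi \<Otimes>\<^sub>M ?P) (\<lambda>z. L n (fst z) (fst (snd z)) \<noteq> snd (snd z))"
    using pred_intros_logic(2)[OF pred_intros_logic(6)[OF g sndm]] by simp
  then have Eset: "?E \<in> sets (?Pi \<Otimes>\<^sub>M ?P)"
    unfolding pred_def by (simp add: split_beta' case_prod_beta)
  have "emeasure (?Pi \<Otimes>\<^sub>M ?P) ?E = (\<integral>\<^sup>+\<sigma>. emeasure ?P (Pair \<sigma> -` ?E) \<partial>?Pi)"
    by (rule P.emeasure_pair_measure_alt[OF Eset])
  also have "\<dots> \<ge> (\<integral>\<^sup>+\<sigma>. ennreal e \<partial>?Pi)"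
  proof (rule nn_integral_mono)
    fix \<sigma> assume \<sigma>: "\<sigma> \<in> space ?Pi"
    let ?C = "{x\<in>space M. L n \<sigma> x}"
    have \<sigma>': "\<sigma> \<in> space (PiM {..<n} (\<lambda>_. ?N))" using \<sigma> spPi by simp
    have "(\<lambda>x. L n \<sigma> x) \<in> M \<rightarrow>\<^sub>M count_space UNIV"
      using measurable_Pair2[OF L0 \<sigma>'] by simp
    then have C: "?C \<in> sets M" unfolding pred_def[symmetric] by simp
    have sec: "Pair \<sigma> -` ?E = {(x,y)\<in>space ?P. L n \<sigma> x \<noteq> y}"
      using \<sigma> by (auto simp: space_pair_measure)
    have "emeasure ?P (Pair \<sigma> -` ?E) = emeasure M ((A - ?C) \<union> (?C - A))"
      unfolding sec by (rule joint_err[OF M A C])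
    also have "\<dots> = ennreal (measure M ((A - ?C) \<union> (?C - A)))"
      by (simp add: Mp.emeasure_eq_measure)
    also have "\<dots> \<ge> ennreal e"
    proof -
      have "\<not> measure M ((A - ?C) \<union> (?C - A)) < e" using contra n1 \<sigma>' C by blast
      then show ?thesis by (intro ennreal_leI) simp
    qed
    finally show "ennreal e \<le> emeasure ?P (Pair \<sigma> -` ?E)" .
  qed
  also have "(\<integral>\<^sup>+\<sigma>. ennreal e \<partial>?Pi) = ennreal e"
    by (simp add: Pi.emeasure_space_1)
  finally have "ennreal e \<le> emeasure (?Pi \<Otimes>\<^sub>M ?P) ?E" .
  then have "e \<le> measure (?Pi \<Otimes>\<^sub>M ?P) ?E"
    using e by (simp add: PP.emeasure_eq_measure)
  moreover have "learning_error ?P L n = measure (?Pi \<Otimes>\<^sub>M ?P) ?E"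
    by (simp add: learning_error_def)
  ultimately show False using le by simp
qed

context includes cardinal_syntax
begin

lemma card_PiE_pow:
  fixes n :: nat
  assumes inf: "\<not> finite X"
  shows "|PiE {..<n} (\<lambda>_. X)| \<le>o |X|"
proof (induction n)
  case 0
  have ne: "X \<noteq> {}" using inf by auto
  show ?case using card_of_singl_ordLeq[OF ne] by simp
next
  case (Suc n)
  have "inj_on (\<lambda>f. (restrict f {..<n}, f n)) (PiE {..<Suc n} (\<lambda>_. X))"
  proof (rule inj_onI)
    fix f g assume f: "f \<in> PiE {..<Suc n} (\<lambda>_. X)" and g: "g \<in> PiE {..<Suc n} (\<lambda>_. X)"
      and eq: "(restrict f {..<n}, f n) = (restrict g {..<n}, g n)"
    show "f = g"
    proof (rule ext)
      fix i
      show "f i = g i"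
      proof (cases "i < Suc n")
        case True
        then have "i < n \<or> i = n" by auto
        then show ?thesis
        proof
          assume i: "i < n"
          have "restrict f {..<n} i = restrict g {..<n} i" using eq by simp
          then show ?thesis using i by simp
        next
          assume "i = n" then show ?thesis using eq by simp
        qed
      next
        case False
        then show ?thesis using f g by (auto simp: PiE_def extensional_def)
      qed
    qed
  qed
  moreover have "(\<lambda>f. (restrict f {..<n}, f n)) ` (PiE {..<Suc n} (\<lambda>_. X)) \<subseteq> PiE {..<n} (\<lambda>_. X) \<times> X"
  proof (rule image_subsetI)
    fix f assume f: "f \<in> PiE {..<Suc n} (\<lambda>_. X)"
    have "\<forall>i\<in>{..<n}. f i \<in> X" using PiE_mem[OF f] by simp
    then have "restrict f {..<n} \<in> PiE {..<n} (\<lambda>_. X)" by (simp only: restrict_PiE_iff)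
    moreover have "f n \<in> X" using PiE_mem[OF f] by simp
    ultimately show "(restrict f {..<n}, f n) \<in> PiE {..<n} (\<lambda>_. X) \<times> X" by (rule SigmaI)
  qed
  ultimately have "|PiE {..<Suc n} (\<lambda>_. X)| \<le>o |PiE {..<n} (\<lambda>_. X) \<times> X|"
    unfolding card_of_ordLeq[symmetric] by (intro exI conjI)
  moreover have "|PiE {..<n} (\<lambda>_. X) \<times> X| \<le>o |X|"
    apply (rule card_of_Times_ordLeq_infinite_Field)
       apply (simp only: Field_card_of inf not_False_eq_True)
      apply (rule Suc.IH)
     apply (rule card_of_mono1[OF subset_refl])
    apply (rule card_of_Card_order)
    done
  ultimately show ?case by (rule ordLeq_transitive)
qed

lemma finite_case:
  assumes M: "prob_space M" and fin: "finite (space M)"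
  shows "maharam_type_le M (space M)"
proof -
  define atom where "atom \<omega> = (\<Inter>B\<in>{B\<in>sets M. \<omega> \<in> B}. B)" for \<omega>
  have finsets: "finite (sets M)"
    using finite_subset[OF sets.space_closed[of M]] fin by simp
  have atom_sets: "atom \<omega> \<in> sets M" if "\<omega> \<in> space M" for \<omega>
    unfolding atom_def using that finsets by (intro sets.finite_INT) auto
  have atom_in: "\<omega> \<in> atom \<omega>" for \<omega> unfolding atom_def by auto
  have atom_sub: "atom \<omega> \<subseteq> A" if "A \<in> sets M" "\<omega> \<in> A" for \<omega> A
    unfolding atom_def using that by auto
  define S where "S = (\<lambda>\<omega>. ma_class M (atom \<omega>)) ` space M"
  have "S \<subseteq> measure_algebra M"
    unfolding S_def measure_algebra_def using atom_sets by auto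
  moreover have "|S| \<le>o |space M|" unfolding S_def by (rule card_of_image)
  moreover have "ma_dense M (ma_generated M S)"
    unfolding ma_dense_def
  proof (intro ballI allI impI)
    fix A e assume A: "A \<in> sets M" and e: "(e::real) > 0"
    have gen: "ma_class M (\<Union>\<omega>\<in>F. atom \<omega>) \<in> ma_generated M S \<and> (\<Union>\<omega>\<in>F. atom \<omega>) \<in> sets M"
      if "finite F" "F \<subseteq> space M" for F
      using that
    proof (induction F rule: finite_induct)
      case empty
      have "ma_class M (space M - space M) \<in> ma_generated M S"
        by (rule gen_compl) (auto intro: gen_top)
      then show ?case by simp
    next
      case (insert x F)
      then have x: "x \<in> space M" and IH: "ma_class M (\<Union>\<omega>\<in>F. atom \<omega>) \<in> ma_generated M S"
        "(\<Union>\<omega>\<in>F. atom \<omega>) \<in> sets M" by auto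
      have bx: "ma_class M (atom x) \<in> ma_generated M S"
        by (rule gen_base) (use x in \<open>auto simp: S_def\<close>)
      have "ma_class M (atom x \<union> (\<Union>\<omega>\<in>F. atom \<omega>)) \<in> ma_generated M S"
        by (rule gen_union[OF atom_sets[OF x] IH(2) bx IH(1)])
      then show ?case using atom_sets[OF x] IH(2) by auto
    qed
    have Asub: "A \<subseteq> space M" using sets.sets_into_space[OF A] .
    have eqA: "(\<Union>\<omega>\<in>A. atom \<omega>) = A" using atom_in atom_sub[OF A] by blast
    have "ma_class M A \<in> ma_generated M S"
      using gen[OF finite_subset[OF Asub fin] Asub] eqA by simp
    then show "\<exists>B\<in>sets M. ma_class M B \<in> ma_generated M S \<and> measure M ((A - B) \<union> (B - A)) < e"
      using A e by (intro bexI[of _ A]) auto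
  qed
  ultimately show ?thesis unfolding maharam_type_le_def by blast
qed

end

theorem mainTheorem4:
  fixes M :: "'a measure" and L :: "'a learning_rule"
  assumes "prob_space M"
    and "is_learning_rule M L"
    and "\<forall>\<eta>. is_regression M \<eta> \<longrightarrow> consistent_under M L \<eta>"
  shows "maharam_type_le M (space M)"
  including cardinal_syntax
proof (cases "finite (space M)")
  case True
  then show ?thesis using finite_case[OF assms(1)] by blast
next
  case False
  note inf = False
  let ?N = "M \<Otimes>\<^sub>M count_space (UNIV::bool set)"
  let ?X = "space M \<times> (UNIV::bool set)"
  let ?Q = "\<lambda>n. space (PiM {..<n} (\<lambda>_. ?N))"
  have Q: "?Q n = PiE {..<n} (\<lambda>_. ?X)" for n :: nat
    by (simp add: space_PiM space_pair_measure)
  have infX: "\<not> finite ?X"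
  proof
    assume "finite ?X"
    then have "finite (fst ` ?X)" by (rule finite_imageI)
    moreover have "fst ` ?X = space M" by force
    ultimately show False using inf by simp
  qed
  have natO: "|UNIV::nat set| \<le>o |space M|" using inf infinite_iff_card_of_nat by blast
  have boolO: "|UNIV::bool set| \<le>o |space M|"
  proof -
    have "|UNIV::bool set| \<le>o |UNIV::nat set|"
      unfolding card_of_ordLeq[symmetric]
      by (rule exI[of _ "\<lambda>b. if b then 1 else (0::nat)"]) (auto simp: inj_on_def)
    then show ?thesis using natO ordLeq_transitive by blast
  qed
  have XO: "|?X| \<le>o |space M|"
    apply (rule card_of_Times_ordLeq_infinite_Field)
       apply (simp only: Field_card_of inf not_False_eq_True)
      apply (rule card_of_mono1[OF subset_refl])
     apply (rule boolO)
    apply (rule card_of_Card_order)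
    done
  have QO: "|?Q n| \<le>o |space M|" for n :: nat
    unfolding Q using card_PiE_pow[OF infX, of n] XO ordLeq_transitive by blast
  let ?C = "\<lambda>n \<sigma>. {x\<in>space M. L n \<sigma> x}"
  have Cs: "?C n \<sigma> \<in> sets M" if "n \<ge> 1" "\<sigma> \<in> ?Q n" for n :: nat and \<sigma>
  proof -
    have L0: "(\<lambda>(\<sigma>, x). L n \<sigma> x) \<in> (PiM {..<n} (\<lambda>_. ?N) \<Otimes>\<^sub>M M) \<rightarrow>\<^sub>M count_space UNIV"
      using assms(2) that by (simp add: is_learning_rule_def)
    have "(\<lambda>x. L n \<sigma> x) \<in> M \<rightarrow>\<^sub>M count_space UNIV"
      using measurable_Pair2[OF L0 that(2)] by simp
    then show ?thesis unfolding pred_def[symmetric] by simp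
  qed
  define I where "I = (SIGMA n:{n. n \<ge> (1::nat)}. ?Q n)"
  define S where "S = (\<lambda>(n, \<sigma>). ma_class M (?C n \<sigma>)) ` I"
  have "S \<subseteq> measure_algebra M"
  proof
    fix c assume "c \<in> S"
    then obtain n \<sigma> where ns: "(n, \<sigma>) \<in> I" and c: "c = ma_class M (?C n \<sigma>)"
      unfolding S_def by auto
    from ns have "n \<ge> 1" "\<sigma> \<in> ?Q n" unfolding I_def by blast+
    then have "?C n \<sigma> \<in> sets M" by (rule Cs)
    then show "c \<in> measure_algebra M" unfolding measure_algebra_def c by (rule imageI)
  qed
  moreover have "|S| \<le>o |space M|"
  proof -
    have "|I| \<le>o |space M|"
      unfolding I_def
      by (rule card_of_Sigma_ordLeq_infinite[OF inf])
         (use ordLeq_transitive[OF card_of_mono1[OF subset_UNIV] natO] QO in auto)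
    then show ?thesis unfolding S_def using card_of_image ordLeq_transitive by blast
  qed
  moreover have "ma_dense M (ma_generated M S)"
    unfolding ma_dense_def
  proof (intro ballI allI impI)
    fix A e assume A: "A \<in> sets M" and e: "(e::real) > 0"
    obtain n \<sigma> where n: "n \<ge> 1" and \<sigma>: "\<sigma> \<in> ?Q n" and Cm: "?C n \<sigma> \<in> sets M"
      and lt: "measure M ((A - ?C n \<sigma>) \<union> (?C n \<sigma> - A)) < e"
      using approx[OF assms A e] by blast
    have "(n, \<sigma>) \<in> I" unfolding I_def using n \<sigma> by blast
    then have "ma_class M (?C n \<sigma>) \<in> S" unfolding S_def by (rule rev_image_eqI) simp
    then have "ma_class M (?C n \<sigma>) \<in> ma_generated M S" by (rule gen_base)
    then show "\<exists>B\<in>sets M. ma_class M B \<in> ma_generated M S \<and> measure M ((A - B) \<union> (B - A)) < e"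
      using Cm lt by blast
  qed
  ultimately show ?thesis unfolding maharam_type_le_def by blast
qed

end
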